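(* Let $(M,g)$ be a Riemannian manifold of dimension $n$, with $\mathcal{T}M$, $V$, $\xi_1,\xi_2$, $\omega^1,\omega^2$, $f$ as in the context (on the open set where $F^2+K^2>0$). Then $(f,(\xi_a),(\omega^a))_{a=1,2}$ is a framed $f(3,1)$-structure on $V$, namely: (i) $\omega^a(\xi_b)=\delta^a_b$, $f(\xi_a)=0$ and $\omega^a\circ f=0$ for $a,b\in\{1,2\}$; (ii) $f^2(X)=-X+\omega^1(X)\xi_1+\omega^2(X)\xi_2$ for every $X\in\Gamma(V)$; (iii) $f$ has rank $2n-2$ and $f^3+f=0$.
   Context: Let $M$ be an $n$-dimensional smooth manifold with a Riemannian metric $g=(g_{ij})$, with inverse matrix $(g^{ij})$; summation convention is used. The big-tangent manifold $\mathcal{T}M$ is the total space of $TM\oplus T^*M\to M$, with local coordinates $(x^i,y^i,p_i)$ (the point $y^i\frac{\partial}{\partial x^i}|_x+p_i\,dx^i|_x$). The vertical bundle $V\subset T\mathcal{T}M$ is tangent to the fibres, locally spanned by $\{\frac{\partial}{\partial y^i},\frac{\partial}{\partial p_i}\}$. Put $y_i=g_{ij}y^j$, $p^i=g^{ij}p_j$, $F^2=g_{ij}y^iy^j$, $K^2=g^{ij}p_ip_j$; all objects are considered where $F^2+K^2>0$. $\phi:V\to V$ is given by $\phi(\frac{\partial}{\partial y^i})=-g_{ij}\frac{\partial}{\partial p_j}$, $\phi(\frac{\partial}{\partial p_i})=g^{ij}\frac{\partial}{\partial y^j}$. $\xi_2=\frac{1}{\sqrt{F^2+K^2}}(y^i\frac{\partial}{\partial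 y^i}+p_i\frac{\partial}{\partial p_i})$, $\xi_1=\frac{1}{\sqrt{F^2+K^2}}(p^i\frac{\partial}{\partial y^i}-y_i\frac{\partial}{\partial p_i})$. $\omega^1,\omega^2\in\Gamma(V^* )$: $\omega^1(\frac{\partial}{\partial y^i})=\frac{p_i}{\sqrt{F^2+K^2}}$, $\omega^1(\frac{\partial}{\partial p_i})=-\frac{y^i}{\sqrt{F^2+K^2}}$, $\omega^2(\frac{\partial}{\partial y^i})=\frac{y_i}{\sqrt{F^2+K^2}}$, $\omega^2(\frac{\partial}{\partial p_i})=\frac{p^i}{\sqrt{F^2+K^2}}$. $f:V\to V$ is defined by $f(X)=\phi(X)-\omega^2(X)\xi_1+\omega^1(X)\xi_2$. *)

theory Defs
  imports "HOL-Analysis.Analysis"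
begin

text \<open>Pointwise (fibrewise) model of the vertical bundle V of the big-tangent
manifold at a point (x,y,p).  A vertical vector
X = a^i d/dy^i + b_i d/dp_i is represented by the pair (a,b).\<close>

type_synonym 'n vert = "(real ^ 'n) \<times> (real ^ 'n)"

definition riem_metric :: "real ^ 'n ^ 'n \<Rightarrow> bool" where
  "riem_metric g \<longleftrightarrow> transpose g = g \<and> (\<forall>v. v \<noteq> 0 \<longrightarrow> v \<bullet> (g *v v) > 0)"

definition Fsq :: "real ^ 'n ^ 'n \<Rightarrow> real ^ 'n \<Rightarrow> real" where
  "Fsq g y = y \<bullet> (g *v y)"

definition Ksq :: "real ^ 'n ^ 'n \<Rightarrow> real ^ 'n \<Rightarrow> real" where
  "Ksq g p = p \<bullet> (matrix_inv g *v p)"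

definition nrm :: "real ^ 'n ^ 'n \<Rightarrow> real ^ 'n \<Rightarrow> real ^ 'n \<Rightarrow> real" where
  "nrm g y p = sqrt (Fsq g y + Ksq g p)"

definition phi :: "real ^ 'n ^ 'n \<Rightarrow> 'n vert \<Rightarrow> 'n vert" where
  "phi g X = (matrix_inv g *v snd X, - (g *v fst X))"

definition xi :: "real ^ 'n ^ 'n \<Rightarrow> real ^ 'n \<Rightarrow> real ^ 'n \<Rightarrow> nat \<Rightarrow> 'n vert" where
  "xi g y p a =
     (if a = 1 then (inverse (nrm g y p) *\<^sub>R (matrix_inv g *v p), inverse (nrm g y p) *\<^sub>R (- (g *v y)))
      else (inverse (nrm g y p) *\<^sub>R y, inverse (nrm g y p) *\<^sub>R p))"

definition omega :: "real ^ 'n ^ 'n \<Rightarrow> real ^ 'n \<Rightarrow> real ^ 'n \<Rightarrow> nat \<Rightarrow> 'n vert \<Rightarrow> real" where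
  "omega g y p a X =
     (if a = 1 then (fst X \<bullet> p - snd X \<bullet> y) / nrm g y p
      else (fst X \<bullet> (g *v y) + snd X \<bullet> (matrix_inv g *v p)) / nrm g y p)"

definition fstr :: "real ^ 'n ^ 'n \<Rightarrow> real ^ 'n \<Rightarrow> real ^ 'n \<Rightarrow> 'n vert \<Rightarrow> 'n vert" where
  "fstr g y p X = phi g X - omega g y p 2 X *\<^sub>R xi g y p 1 + omega g y p 1 X *\<^sub>R xi g y p 2"

end

theory Submission imports Defs begin

lemma mv_neg: "(A::real^'n^'m) *v (- x) = - (A *v x)"
  by (metis add.inverse_unique add.right_inverse matrix_vector_mult_0_right matrix_vector_right_distrib)

lemma inv_facts:
  assumes "riem_metric g"
  shows "matrix_inv g *v (g *v v) = v" "g *v (matrix_inv g *v v) = v"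
proof -
  have "\<forall>x. g *v x = 0 \<longrightarrow> x = 0"
  proof (intro allI impI, rule ccontr)
    fix x assume "g *v x = 0" "x \<noteq> 0"
    with assms show False unfolding riem_metric_def by force
  qed
  then have "invertible g" using matrix_left_invertible_ker invertible_left_inverse by blast
  then have "g ** matrix_inv g = mat 1 \<and> matrix_inv g ** g = mat 1"
    unfolding invertible_def matrix_inv_def by (rule someI_ex)
  then show "matrix_inv g *v (g *v v) = v" "g *v (matrix_inv g *v v) = v"
    by (simp_all add: matrix_vector_mul_assoc)
qed

lemma sym_g:
  assumes "riem_metric g"
  shows "u \<bullet> (g *v w) = (g *v u) \<bullet> w"
proof -
  have "transpose g = g" using assms unfolding riem_metric_def by simp
  then have "w \<bullet> (g *v u) = (g *v w) \<bullet> u"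
    by (metis dot_lmul_matrix transpose_matrix_vector)
  then show ?thesis by (simp add: inner_commute)
qed

lemma sym_H:
  assumes "riem_metric g"
  shows "u \<bullet> (matrix_inv g *v w) = (matrix_inv g *v u) \<bullet> w"
proof -
  have "u \<bullet> (matrix_inv g *v w) = (g *v (matrix_inv g *v u)) \<bullet> (matrix_inv g *v w)"
    using inv_facts[OF assms] by simp
  also have "\<dots> = (matrix_inv g *v u) \<bullet> (g *v (matrix_inv g *v w))"
    using sym_g[OF assms] by simp
  also have "\<dots> = (matrix_inv g *v u) \<bullet> w" using inv_facts[OF assms] by simp
  finally show ?thesis .
qed

lemma lin_omega: "linear (omega g y p a)"
  by (rule linearI) (auto simp: omega_def inner_add_left add_divide_distrib diff_divide_distrib algebra_simps)

lemma lin_phi: "linear (phi g)"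
  by (rule linearI) (auto simp: phi_def matrix_vector_right_distrib matrix_vector_mult_scaleR algebra_simps)

lemma lin_f: "linear (fstr g y p)"
  by (rule linearI) (simp_all add: fstr_def linear_add[OF lin_phi] linear_add[OF lin_omega]
        linear_scale[OF lin_phi] linear_scale[OF lin_omega] algebra_simps)

lemma phi_phi: "riem_metric g \<Longrightarrow> phi g (phi g X) = - X"
  by (cases X) (simp add: phi_def mv_neg inv_facts)


lemma om1_phi: assumes "riem_metric g" shows "omega g y p 1 (phi g X) = omega g y p 2 X"
proof (cases X)
  case (Pair a b)
  have 1: "(matrix_inv g *v b) \<bullet> p = b \<bullet> (matrix_inv g *v p)" using sym_H[OF assms, of b p] by simp
  have 2: "(g *v a) \<bullet> y = a \<bullet> (g *v y)" using sym_g[OF assms, of a y] by simp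
  show ?thesis using 1 2 by (simp add: Pair phi_def omega_def)
qed

lemma om2_phi: assumes "riem_metric g" shows "omega g y p 2 (phi g X) = - omega g y p 1 X"
proof (cases X)
  case (Pair a b)
  have 1: "(matrix_inv g *v b) \<bullet> (g *v y) = b \<bullet> y" using sym_H[OF assms, of b "g *v y"] inv_facts[OF assms] by simp
  have 2: "(g *v a) \<bullet> (matrix_inv g *v p) = a \<bullet> p" using sym_g[OF assms, of a "matrix_inv g *v p"] inv_facts[OF assms] by simp
  show ?thesis using 1 2 by (simp add: Pair phi_def omega_def inner_commute[of y b] diff_divide_distrib)
qed
lemma phi_xi1: "riem_metric g \<Longrightarrow> phi g (xi g y p 1) = - xi g y p 2"
  by (simp add: phi_def xi_def matrix_vector_mult_scaleR mv_neg inv_facts)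

lemma phi_xi2: "riem_metric g \<Longrightarrow> phi g (xi g y p 2) = xi g y p 1"
  by (simp add: phi_def xi_def matrix_vector_mult_scaleR mv_neg inv_facts)

lemma nrm_sq: "Fsq g y + Ksq g p > 0 \<Longrightarrow> nrm g y p * nrm g y p = Fsq g y + Ksq g p \<and> nrm g y p > 0"
  unfolding nrm_def by simp

lemma om_xi:
  assumes "riem_metric g" "Fsq g y + Ksq g p > 0"
  shows "omega g y p 1 (xi g y p 1) = 1" "omega g y p 1 (xi g y p 2) = 0"
    "omega g y p 2 (xi g y p 1) = 0" "omega g y p 2 (xi g y p 2) = 1"
proof -
  from nrm_sq[OF assms(2)] have N: "nrm g y p * nrm g y p = Fsq g y + Ksq g p" "nrm g y p > 0" by auto
  show "omega g y p 1 (xi g y p 1) = 1"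
    using N assms(2) by (simp add: omega_def xi_def Fsq_def Ksq_def field_simps inner_commute)
  show "omega g y p 1 (xi g y p 2) = 0"
    using N by (simp add: omega_def xi_def inner_commute)
  show "omega g y p 2 (xi g y p 1) = 0"
    using N sym_H[OF assms(1)] by (simp add: omega_def xi_def inner_commute)
  show "omega g y p 2 (xi g y p 2) = 1"
    using N assms(2) by (simp add: omega_def xi_def Fsq_def Ksq_def field_simps inner_commute)
qed


declare One_nat_def[simp del]

theorem theorem5p1:
  fixes g :: "real ^ 'n ^ 'n" and y p :: "real ^ 'n"
  assumes "riem_metric g"
    and "Fsq g y + Ksq g p > 0"
  shows "(\<forall>a\<in>{1,2}. \<forall>b\<in>{1,2}. omega g y p a (xi g y p b) = (if a = b then 1 else 0))
    \<and> (\<forall>a\<in>{1,2}. fstr g y p (xi g y p a) = 0)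
    \<and> (\<forall>a\<in>{1,2}. \<forall>X. omega g y p a (fstr g y p X) = 0)
    \<and> (\<forall>X. fstr g y p (fstr g y p X)
           = - X + omega g y p 1 X *\<^sub>R xi g y p 1 + omega g y p 2 X *\<^sub>R xi g y p 2)
    \<and> dim (range (fstr g y p)) = 2 * CARD('n) - 2
    \<and> (\<forall>X. fstr g y p (fstr g y p (fstr g y p X)) + fstr g y p X = 0)"
proof -
  note ox = om_xi[OF assms]
  note lo = linear_add[OF lin_omega] linear_diff[OF lin_omega] linear_scale[OF lin_omega] linear_neg[OF lin_omega]
  note lp = linear_add[OF lin_phi] linear_diff[OF lin_phi] linear_scale[OF lin_phi] linear_neg[OF lin_phi]
  note lf = linear_add[OF lin_f] linear_diff[OF lin_f] linear_scale[OF lin_f] linear_neg[OF lin_f]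
  have P1: "\<forall>a\<in>{1,2}. \<forall>b\<in>{1,2}. omega g y p a (xi g y p b) = (if a = b then 1 else 0)"
    using ox by auto
  have fxi1: "fstr g y p (xi g y p 1) = 0"
    by (simp add: fstr_def ox phi_xi1[OF assms(1)])
  have fxi2: "fstr g y p (xi g y p 2) = 0"
    by (simp add: fstr_def ox phi_xi2[OF assms(1)])
  have of1: "omega g y p 1 (fstr g y p X) = 0" for X
    by (simp add: fstr_def lo ox om1_phi[OF assms(1)])
  have of2: "omega g y p 2 (fstr g y p X) = 0" for X
    by (simp add: fstr_def lo ox om2_phi[OF assms(1)])
  have ff: "fstr g y p (fstr g y p X)
           = - X + omega g y p 1 X *\<^sub>R xi g y p 1 + omega g y p 2 X *\<^sub>R xi g y p 2" for X
  proof -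
    have "fstr g y p (fstr g y p X) = phi g (fstr g y p X)"
      by (simp add: fstr_def[of g y p "fstr g y p X"] of1 of2)
    also have "\<dots> = - X + omega g y p 1 X *\<^sub>R xi g y p 1 + omega g y p 2 X *\<^sub>R xi g y p 2"
      by (simp add: fstr_def lp phi_phi[OF assms(1)] phi_xi1[OF assms(1)] phi_xi2[OF assms(1)] algebra_simps)
    finally show ?thesis .
  qed
  have fff: "fstr g y p (fstr g y p (fstr g y p X)) + fstr g y p X = 0" for X
    by (simp add: ff lf fxi1 fxi2)
  define N where "N = nrm g y p"
  have N: "N > 0" using nrm_sq[OF assms(2)] N_def by simp
  define u1 :: "'n vert" where "u1 = (p, - y)"
  define u2 :: "'n vert" where "u2 = (g *v y, matrix_inv g *v p)"
  have u1X: "u1 \<bullet> X = N * omega g y p 1 X" for X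
    using N by (cases X) (simp add: u1_def N_def omega_def inner_commute)
  have u2X: "u2 \<bullet> X = N * omega g y p 2 X" for X
    using N by (cases X) (simp add: u2_def N_def omega_def inner_commute)
  have R: "range (fstr g y p) = {X. orthogonal u1 X \<and> orthogonal u2 X}"
  proof (intro set_eqI iffI)
    fix X assume "X \<in> range (fstr g y p)"
    then show "X \<in> {X. orthogonal u1 X \<and> orthogonal u2 X}"
      by (auto simp: orthogonal_def u1X u2X of1 of2)
  next
    fix X assume "X \<in> {X. orthogonal u1 X \<and> orthogonal u2 X}"
    then have "omega g y p 1 X = 0" "omega g y p 2 X = 0"
      using N by (auto simp: orthogonal_def u1X u2X)
    then have "fstr g y p (- fstr g y p X) = X" by (simp add: lf ff)
    then show "X \<in> range (fstr g y p)" by (metis rangeI)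
  qed
  have O: "{z \<in> UNIV. \<forall>x \<in> span {u1, u2}. orthogonal x z} = {X. orthogonal u1 X \<and> orthogonal u2 X}"
  proof (intro set_eqI iffI)
    fix z assume "z \<in> {z \<in> UNIV. \<forall>x \<in> span {u1, u2}. orthogonal x z}"
    then show "z \<in> {X. orthogonal u1 X \<and> orthogonal u2 X}" by (simp add: span_base)
  next
    fix z assume z: "z \<in> {X. orthogonal u1 X \<and> orthogonal u2 X}"
    have "orthogonal z x" if "x \<in> span {u1, u2}" for x
      by (rule orthogonal_to_span[OF that]) (use z in \<open>auto simp: orthogonal_commute\<close>)
    then show "z \<in> {z \<in> UNIV. \<forall>x \<in> span {u1, u2}. orthogonal x z}"
      by (simp add: orthogonal_commute)
  qed
  have i1: "u1 \<bullet> xi g y p 1 = N" "u2 \<bullet> xi g y p 1 = 0" "u2 \<bullet> xi g y p 2 = N"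
    by (simp_all add: u1X u2X ox)
  have u2nz: "u2 \<noteq> 0" using i1 N by auto
  have u12: "u1 \<noteq> u2" using i1 N by auto
  have nsp: "u1 \<notin> span {u2}"
  proof
    assume "u1 \<in> span {u2}"
    then obtain k where "u1 = k *\<^sub>R u2" by (auto simp: span_singleton)
    then have "u1 \<bullet> xi g y p 1 = k * (u2 \<bullet> xi g y p 1)" by simp
    with i1 N show False by simp
  qed
  have ind: "independent {u1, u2}"
    using u2nz nsp u12 by (simp add: independent_insert)
  have d2: "dim (span {u1, u2}) = 2"
    using dim_eq_card_independent[OF ind] u12 by simp
  have "dim {z \<in> UNIV. \<forall>x \<in> span {u1, u2}. orthogonal x z} + dim (span {u1, u2}) = dim (UNIV :: 'n vert set)"
    by (rule dim_subspace_orthogonal_to_vectors) (auto simp: subspace_span)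
  then have "dim (range (fstr g y p)) + 2 = 2 * CARD('n)"
    using O R d2 by (simp add: dim_UNIV)
  then have rk: "dim (range (fstr g y p)) = 2 * CARD('n) - 2" by linarith
  show ?thesis using P1 fxi1 fxi2 of1 of2 ff rk fff by auto
qed
end
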